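(* Let $G=(V(G),E(G),\ell)$ be an $n$-order node-labeled graph and $k\ge 2$. Then for all $t\ge 1$ there exist functions $g^{(0)},\dots,g^{(t)}\colon V(G)^k\to\mathbb{R}$, scalars $\beta_1,\dots,\beta_k$ and feed-forward networks $\mathsf{FFN}$ with $$g^{(s)}(\mathbf{u})=\mathsf{FFN}\Big(g^{(s-1)}(\mathbf{u})+\sum_{j\in[k]}\beta_j\sum_{w\in V(G)}g^{(s-1)}(\phi_j(\mathbf{u},w))\Big)\quad(1\le s\le t),$$ where $g^{(0)}$ is initialized consistently with the labels $\ell$ and the atomic types (i.e., $g^{(0)}(\mathbf{u})=g^{(0)}(\mathbf{v})\iff C^k_0(\mathbf{u})=C^k_0(\mathbf{v})$), such that for all $\mathbf{u},\mathbf{v}\in V(G)^k$, $$C^k_t(\mathbf{u})=C^k_t(\mathbf{v})\iff g^{(t)}(\mathbf{u})=g^{(t)}(\mathbf{v}).$$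
   Context: $\phi_j(\mathbf{v},w)=(v_1,\dots,v_{j-1},w,v_{j+1},\dots,v_k)$. $C^k_t$ is the $k$-WL coloring of $k$-tuples: $C^k_0(\mathbf{v})$ is determined by the atomic type of $\mathbf{v}$ (which pairs of entries are equal and which are adjacent) together with the labels $\ell(v_1),\dots,\ell(v_k)$, and $C^k_t(\mathbf{v})=\mathsf{RELABEL}\big(C^k_{t-1}(\mathbf{v}),(\{\!\{C^k_{t-1}(\phi_j(\mathbf{v},w))\mid w\in V(G)\}\!\})_{j=1}^k\big)$ with $\mathsf{RELABEL}$ injective into fresh natural numbers. $\mathsf{FFN}$ denotes a feed-forward (MLP) network. *)

theory Defs
  imports Complex_Main "HOL-Library.Multiset"
begin

text \<open>A k-tuple of vertices is a list of length k with entries in V.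
  Position j (0-based) of the list is the (j+1)-th entry of the tuple.\<close>
definition ktuples :: "'a set \<Rightarrow> nat \<Rightarrow> 'a list set" where
  "ktuples V k = {u. length u = k \<and> set u \<subseteq> V}"

text \<open>phi_j(v,w): replace the j-th entry of v by w (0-based): v[j := w].\<close>

text \<open>Colours are represented as free terms; the constructor Refine is an injective
  relabelling, so equality of colours is exactly equality under any injective RELABEL.\<close>
datatype 'l wlcol =
    Atom "bool list list" "bool list list" "'l list"
  | Refine "'l wlcol" "'l wlcol multiset list"

fun kwl :: "'a set \<Rightarrow> ('a \<Rightarrow> 'a \<Rightarrow> bool) \<Rightarrow> ('a \<Rightarrow> 'l) \<Rightarrow> nat \<Rightarrow> nat \<Rightarrow> 'a list \<Rightarrow> 'l wlcol" where
  "kwl V E lab k 0 v =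
     Atom (map (\<lambda>i. map (\<lambda>j. v ! i = v ! j) [0..<k]) [0..<k])
          (map (\<lambda>i. map (\<lambda>j. E (v ! i) (v ! j)) [0..<k]) [0..<k])
          (map lab v)"
| "kwl V E lab k (Suc t) v =
     Refine (kwl V E lab k t v)
            (map (\<lambda>j. image_mset (\<lambda>w. kwl V E lab k t (v[j := w])) (mset_set V)) [0..<k])"

definition relu :: "real \<Rightarrow> real" where
  "relu x = max 0 x"

definition affine :: "real list list \<Rightarrow> real list \<Rightarrow> real list \<Rightarrow> real list" where
  "affine W b x = map2 (\<lambda>row bi. sum_list (map2 (*) row x) + bi) W b"

fun mlp_eval :: "(real list list \<times> real list) list \<Rightarrow> real list \<Rightarrow> real list" where
  "mlp_eval [] x = x"
| "mlp_eval [(W, b)] x = affine W b x"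
| "mlp_eval ((W, b) # L) x = mlp_eval L (map relu (affine W b x))"

fun mlp_wf :: "nat \<Rightarrow> (real list list \<times> real list) list \<Rightarrow> nat \<Rightarrow> bool" where
  "mlp_wf d [] d' = (d = d')"
| "mlp_wf d ((W, b) # L) d' =
     (length W = length b \<and> (\<forall>r\<in>set W. length r = d) \<and> mlp_wf (length W) L d')"

definition is_FFN :: "(real \<Rightarrow> real) \<Rightarrow> bool" where
  "is_FFN f \<longleftrightarrow> (\<exists>L. L \<noteq> [] \<and> mlp_wf 1 L 1 \<and> (\<forall>x. f x = hd (mlp_eval L [x])))"

end

theory Submission
  imports Defs
begin

lemma ffn_form: fixes m :: nat and a :: real shows "is_FFN (\<lambda>x. a + (\<Sum>i<m. c i * relu (x - p i)))"
proof -
  define L where "L = [(map (\<lambda>i. [1::real]) [0..<m], map (\<lambda>i. - p i) [0..<m]),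
                       ([map c [0..<m]], [a])]"
  have wf: "mlp_wf 1 L 1" unfolding L_def by auto
  have ev: "hd (mlp_eval L [x]) = a + (\<Sum>i<m. c i * relu (x - p i))" for x
  proof -
    have 1: "affine (map (\<lambda>i. [1::real]) [0..<m]) (map (\<lambda>i. - p i) [0..<m]) [x]
             = map (\<lambda>i. x - p i) [0..<m]"
      unfolding affine_def by (simp add: zip_map1 zip_map2 zip_same_conv_map o_def)
    have 2: "sum_list (map2 (*) (map c [0..<m]) (map relu (map (\<lambda>i. x - p i) [0..<m])))
            = (\<Sum>i<m. c i * relu (x - p i))"
      by (simp add: zip_map1 zip_map2 zip_same_conv_map o_def sum_list_sum_nth lessThan_atLeast0 sum_list_map_eq_sum_count)
    show ?thesis unfolding L_def using 1 2 by (simp add: affine_def)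
  qed
  show ?thesis unfolding is_FFN_def
    by (rule exI[of _ L]) (simp add: wf ev, simp add: L_def)
qed


lemma interp_form:
  fixes S :: "real set" and h :: "real \<Rightarrow> real"
  assumes "finite S"
  shows "\<exists>a (m::nat) c p. \<forall>x\<in>S. h x = a + (\<Sum>i<m. c i * relu (x - p i))"
  using assms
proof (induction S rule: finite_linorder_max_induct)
  case empty
  then show ?case by auto
next
  case (insert b A)
  show ?case
  proof (cases "A = {}")
    case True
    then show ?thesis by (intro exI[of _ "h b"] exI[of _ "0::nat"]) auto
  next
    case False
    obtain a :: real and m :: nat and c p where IH: "\<forall>x\<in>A. h x = a + (\<Sum>i<m. c i * relu (x - p i))"
      using insert by blast
    define m0 where "m0 = Max A"
    have m0A: "m0 \<in> A" using False insert(1) m0_def by simp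
    have bm: "m0 < b" using insert(2) m0A by auto
    have le: "x \<le> m0" if "x \<in> A" for x using that insert(1) m0_def by simp
    define f where "f x = a + (\<Sum>i<m. c i * relu (x - p i))" for x
    define c' where "c' = (h b - f b) / (b - m0)"
    have "\<forall>x\<in>insert b A. h x = a + (\<Sum>i<Suc m. (c(m := c')) i * relu (x - (p(m := m0)) i))"
    proof
      fix x assume x: "x \<in> insert b A"
      have "(\<Sum>i<Suc m. (c(m := c')) i * relu (x - (p(m := m0)) i))
            = (\<Sum>i<m. c i * relu (x - p i)) + c' * relu (x - m0)"
        by (simp add: sum.lessThan_Suc)
      moreover have "x \<in> A \<Longrightarrow> relu (x - m0) = 0" using le by (simp add: relu_def)
      moreover have "relu (b - m0) = b - m0" using bm by (simp add: relu_def)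
      ultimately show "h x = a + (\<Sum>i<Suc m. (c(m := c')) i * relu (x - (p(m := m0)) i))"
        using x IH bm by (auto simp: c'_def f_def)
    qed
    then show ?thesis by blast
  qed
qed

lemma interp:
  fixes S :: "real set" and h :: "real \<Rightarrow> real"
  assumes "finite S"
  shows "\<exists>f. is_FFN f \<and> (\<forall>x\<in>S. f x = h x)"
proof -
  obtain a :: real and m :: nat and c p where "\<forall>x\<in>S. h x = a + (\<Sum>i<m. c i * relu (x - p i))"
    using interp_form[OF assms] by blast
  then show ?thesis using ffn_form[where a=a and m=m and c=c and p=p] by auto
qed

lemma digits_fun:
  fixes N :: nat
  assumes "N > 0"
  shows "(\<forall>p<L. d p < N) \<Longrightarrow> (\<forall>p<L. e p < N) \<Longrightarrow>
    (\<Sum>p<L. d p * N^p) = (\<Sum>p<L. e p * N^p) \<Longrightarrow> \<forall>p<L. d p = e p"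
proof (induction L arbitrary: d e)
  case 0
  then show ?case by simp
next
  case (Suc L)
  have r: "(\<Sum>p<Suc L. f p * N^p) = f 0 + N * (\<Sum>p<L. f (Suc p) * N^p)" for f :: "nat \<Rightarrow> nat"
    by (subst sum.lessThan_Suc_shift) (simp add: sum_distrib_left mult.assoc mult.left_commute)
  define X where "X = (\<Sum>p<L. d (Suc p) * N^p)"
  define Y where "Y = (\<Sum>p<L. e (Suc p) * N^p)"
  have eq: "d 0 + N * X = e 0 + N * Y" using Suc.prems(3) r[of d] r[of e] X_def Y_def by simp
  have d0: "d 0 < N" "e 0 < N" using Suc.prems by auto
  have "(d 0 + N * X) mod N = d 0" using d0 by simp
  moreover have "(e 0 + N * Y) mod N = e 0" using d0 by simp
  ultimately have h0: "d 0 = e 0" using eq by metis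
  have "X = Y" using eq h0 assms by simp
  then have "\<forall>p<L. d (Suc p) = e (Suc p)"
    using Suc.IH[of "\<lambda>p. d (Suc p)" "\<lambda>p. e (Suc p)"] Suc.prems X_def Y_def by auto
  then show ?case using h0 by (auto simp: less_Suc_eq_0_disj)
qed

lemma msum_count:
  fixes f :: "nat \<Rightarrow> nat"
  assumes "set_mset A \<subseteq> {..<L}"
  shows "(\<Sum>x\<in>#A. f x) = (\<Sum>x<L. count A x * f x)"
  using assms
proof (induction A)
  case empty
  then show ?case by simp
next
  case (add a A)
  have "(\<Sum>x<L. count (add_mset a A) x * f x) = (\<Sum>x<L. count A x * f x + (if x = a then f x else 0))"
    by (rule sum.cong) auto
  also have "\<dots> = (\<Sum>x<L. count A x * f x) + f a"
    using add.prems by (simp add: sum.distrib)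
  finally show ?case using add by simp
qed

lemma digits_mset:
  fixes N :: nat
  assumes "N > 0" "\<forall>p. count A p < N" "\<forall>p. count B p < N"
    and "(\<Sum>p\<in>#A. N^p) = (\<Sum>p\<in>#B. N^p)"
  shows "A = B"
proof -
  obtain L where L: "set_mset A \<subseteq> {..<L}" "set_mset B \<subseteq> {..<L}"
  proof
    show "set_mset A \<subseteq> {..<Suc (Max (set_mset A \<union> set_mset B))}"
      by (auto simp: less_Suc_eq_le)
    show "set_mset B \<subseteq> {..<Suc (Max (set_mset A \<union> set_mset B))}"
      by (auto simp: less_Suc_eq_le)
  qed
  have "(\<Sum>p<L. count A p * N^p) = (\<Sum>p<L. count B p * N^p)"
    using assms(4) msum_count[OF L(1)] msum_count[OF L(2)] by metis
  then have "\<forall>p<L. count A p = count B p"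
    using digits_fun[OF assms(1)] assms(2,3) by blast
  moreover have "p \<ge> L \<Longrightarrow> count A p = 0 \<and> count B p = 0" for p
    using L by (meson lessThan_iff not_in_iff not_le subsetD)
  ultimately show ?thesis by (metis multiset_eqI not_le)
qed


lemma image_mset_sum_hom: "image_mset f (sum M J) = (\<Sum>j\<in>J. image_mset f (M j))"
  by (induction J rule: infinite_finite_induct) auto

lemma filter_mset_sum_hom: "filter_mset P (sum M J) = (\<Sum>j\<in>J. filter_mset P (M j))"
  by (induction J rule: infinite_finite_induct) auto

lemma sum_mset_sum_hom: "sum_mset (sum M J) = (\<Sum>j\<in>J. sum_mset (M j))"
  by (induction J rule: infinite_finite_induct) auto

lemma size_sum_hom: "size (sum M J :: 'a multiset) = (\<Sum>j\<in>J. size (M j))"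
  by (induction J rule: infinite_finite_induct) auto

lemma ktuples_upd: "u \<in> ktuples V k \<Longrightarrow> w \<in> V \<Longrightarrow> u[j := w] \<in> ktuples V k"
  unfolding ktuples_def using set_update_subset_insert by fastforce

lemma finite_ktuples: "finite V \<Longrightarrow> finite (ktuples V k)"
  unfolding ktuples_def using finite_lists_length_eq[of V k] by (simp add: conj_commute)


lemma blk:
  fixes K r j :: nat
  assumes "r < K"
  shows "(K * (j + 1) + r) div K = j + 1 \<and> (K * (j + 1) + r) mod K = r"
proof -
  have e: "K * (j + 1) + r = r + (j + 1) * K" by simp
  have "K \<noteq> 0" using assms by simp
  then show ?thesis unfolding e div_mult_self1[OF \<open>K \<noteq> 0\<close>] mod_mult_self1 using assms by simp
qed

theorem propositionI2:
  fixes V :: "'a set" and E :: "'a \<Rightarrow> 'a \<Rightarrow> bool" and lab :: "'a \<Rightarrow> 'l"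
    and k t :: nat
  assumes "finite V"
    and "\<And>x y. E x y \<Longrightarrow> E y x"
    and "\<And>x. \<not> E x x"
    and "k \<ge> 2"
    and "t \<ge> 1"
  shows "\<exists>(g :: nat \<Rightarrow> 'a list \<Rightarrow> real) (\<beta> :: nat \<Rightarrow> real) (F :: nat \<Rightarrow> real \<Rightarrow> real).
           (\<forall>s\<in>{1..t}. is_FFN (F s)) \<and>
           (\<forall>s\<in>{1..t}. \<forall>u\<in>ktuples V k.
               g s u = F s (g (s - 1) u +
                 (\<Sum>j<k. \<beta> j * (\<Sum>w\<in>V. g (s - 1) (u[j := w]))))) \<and>
           (\<forall>u\<in>ktuples V k. \<forall>v\<in>ktuples V k.
               g 0 u = g 0 v \<longleftrightarrow> kwl V E lab k 0 u = kwl V E lab k 0 v) \<and>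
           (\<forall>u\<in>ktuples V k. \<forall>v\<in>ktuples V k.
               kwl V E lab k t u = kwl V E lab k t v \<longleftrightarrow> g t u = g t v)"
proof -
  define n where "n = card V"
  define N :: nat where "N = k * n + 2"
  have N2: "N \<ge> 2" "N > 0" "1 < N" unfolding N_def by auto
  define KT where "KT = ktuples V k"
  have finKT: "finite KT" unfolding KT_def using finite_ktuples[OF assms(1)] .
  define col where "col s u = kwl V E lab k s u" for s u
  define Cols where "Cols = (\<lambda>(s, u). col s u) ` ({..t} \<times> KT)"
  have finCols: "finite Cols" unfolding Cols_def using finKT by simp
  obtain c where cb: "bij_betw c Cols {0..<card Cols}"
    using ex_bij_betw_finite_nat[OF finCols] by blast
  define K where "K = card Cols"
  have cinj: "inj_on c Cols" using cb bij_betw_def by blast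
  have cK: "x \<in> Cols \<Longrightarrow> c x < K" for x using cb K_def bij_betwE by fastforce
  have inCols: "s \<le> t \<Longrightarrow> u \<in> KT \<Longrightarrow> col s u \<in> Cols" for s u
    unfolding Cols_def by force
  define g :: "nat \<Rightarrow> 'a list \<Rightarrow> real" where "g s u = real (N ^ c (col s u))" for s u
  define \<beta> :: "nat \<Rightarrow> real" where "\<beta> j = real (N ^ (K * (j + 1)))" for j
  define Mm where "Mm s u j = image_mset (\<lambda>w. col s (u[j := w])) (mset_set V)" for s u j
  define T where "T s u = add_mset (None, col s u) (\<Sum>j<k. image_mset (Pair (Some j)) (Mm s u j))" for s u
  define enc :: "nat option \<times> 'l wlcol \<Rightarrow> nat" where
    "enc q = (case fst q of None \<Rightarrow> c (snd q) | Some j \<Rightarrow> K * (j + 1) + c (snd q))" for q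
  define Xn where "Xn s u = (\<Sum>p\<in>#image_mset enc (T s u). N ^ p)" for s u
  have upd: "u \<in> KT \<Longrightarrow> w \<in> V \<Longrightarrow> u[j := w] \<in> KT" for u w j
    unfolding KT_def by (rule ktuples_upd)

  have Xn_eq: "g s u + (\<Sum>j<k. \<beta> j * (\<Sum>w\<in>V. g s (u[j := w]))) = real (Xn s u)" for s u
  proof -
    have "Xn s u = N ^ c (col s u) + (\<Sum>j<k. N ^ (K * (j + 1)) * (\<Sum>w\<in>V. N ^ c (col s (u[j := w]))))"
    proof -
      have "Xn s u = N ^ c (col s u) + (\<Sum>j<k. sum_mset (image_mset (\<lambda>w. N ^ (K * (j + 1) + c (col s (u[j := w])))) (mset_set V)))"
        unfolding Xn_def T_def
        by (simp add: image_mset_sum_hom sum_mset_sum_hom Mm_def enc_def multiset.map_comp o_def)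
      also have "\<dots> = N ^ c (col s u) + (\<Sum>j<k. N ^ (K * (j + 1)) * (\<Sum>w\<in>V. N ^ c (col s (u[j := w]))))"
        by (simp only: sum_unfold_sum_mset[symmetric] power_add sum_distrib_left)
      finally show ?thesis .
    qed
    then show ?thesis by (simp add: g_def \<beta>_def)
  qed

  have cnt: "count (image_mset enc (T s u)) p < N" for s u p
  proof -
    have "size (image_mset enc (T s u)) = 1 + k * n"
      by (simp add: T_def size_sum_hom Mm_def n_def)
    then show ?thesis using count_le_size[of "image_mset enc (T s u)" p] N_def by simp
  qed

  have encinj: "inj_on enc (UNIV \<times> Cols)"
  proof (rule inj_onI)
    fix q q' assume q: "q \<in> UNIV \<times> Cols" "q' \<in> UNIV \<times> Cols" and e: "enc q = enc q'"
    obtain a x a' x' where qq: "q = (a, x)" "q' = (a', x')" by fastforce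
    have x: "c x < K" "c x' < K" using q qq cK by auto
    have "a = a' \<and> c x = c x'"
    proof (cases a; cases a')
      fix j j' assume "a = Some j" "a' = Some j'"
      then have "K * (j + 1) + c x = K * (j' + 1) + c x'" using e qq enc_def by simp
      moreover have "(K * (j + 1) + c x) div K = j + 1" "(K * (j' + 1) + c x') div K = j' + 1"
        "(K * (j + 1) + c x) mod K = c x" "(K * (j' + 1) + c x') mod K = c x'"
        using blk[OF x(1), of j] blk[OF x(2), of j'] by simp_all
      ultimately have "j + 1 = j' + 1" "c x = c x'" by metis+
      then show ?thesis using \<open>a = Some j\<close> \<open>a' = Some j'\<close> by simp
    qed (use e qq enc_def x in \<open>auto\<close>)
    then show "q = q'" using qq q cinj by (auto dest: inj_onD)
  qed

  have Tset: "s \<le> t \<Longrightarrow> u \<in> KT \<Longrightarrow> set_mset (T s u) \<subseteq> UNIV \<times> Cols" for s u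
    unfolding T_def Mm_def using inCols upd assms(1)
    by (auto simp: set_mset_sum)

  have decode: "col (Suc s) u = col (Suc s) v"
    if s: "s < t" and uv: "u \<in> KT" "v \<in> KT" and X: "Xn s u = Xn s v" for s u v
  proof -
    have "image_mset enc (T s u) = image_mset enc (T s v)"
      using digits_mset[OF N2(2) _ _ X[unfolded Xn_def]] cnt by blast
    then have TT: "T s u = T s v"
      using multiset.inj_map_strong[of "T s u" "T s v" enc] encinj Tset[of s u] Tset[of s v] s uv
      by (meson inj_onD less_imp_le subsetD)
    have f0: "filter_mset (\<lambda>q. fst q = None) (T s u) = {#(None, col s u)#}" for u
      unfolding T_def by (simp add: filter_mset_sum_hom filter_mset_image_mset)
    have fj: "image_mset snd (filter_mset (\<lambda>q. fst q = Some j) (T s u)) = Mm s u j" if "j < k" for u j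
    proof -
      have "filter_mset (\<lambda>q. fst q = Some j) (T s u) = (\<Sum>j'<k. filter_mset (\<lambda>q. fst q = Some j) (image_mset (Pair (Some j')) (Mm s u j')))"
        unfolding T_def by (simp add: filter_mset_sum_hom)
      also have "\<dots> = (\<Sum>j'<k. if j' = j then image_mset (Pair (Some j)) (Mm s u j) else {#})"
        by (rule sum.cong) (auto simp: filter_mset_image_mset)
      also have "\<dots> = image_mset (Pair (Some j)) (Mm s u j)" using that by (simp add: sum.delta)
      finally show ?thesis by (simp add: multiset.map_comp o_def)
    qed
    have "col s u = col s v" using f0[of u] f0[of v] TT by simp
    moreover have "Mm s u j = Mm s v j" if "j < k" for j using fj[OF that, of u] fj[OF that, of v] TT by simp
    ultimately show ?thesis
      by (simp add: col_def Mm_def[symmetric, unfolded col_def])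
  qed

  have gcol: "g s u = g s' v \<longleftrightarrow> col s u = col s' v"
    if "s \<le> t" "s' \<le> t" "u \<in> KT" "v \<in> KT" for s s' u v
  proof -
    have "g s u = g s' v \<longleftrightarrow> c (col s u) = c (col s' v)"
      unfolding g_def using N2 by (simp add: power_inject_exp)
    also have "\<dots> \<longleftrightarrow> col s u = col s' v"
      using inj_on_eq_iff[OF cinj inCols[OF that(1,3)] inCols[OF that(2,4)]] .
    finally show ?thesis .
  qed

  have Fex: "\<exists>f. is_FFN f \<and> (\<forall>u\<in>KT. f (real (Xn (s - 1) u)) = g s u)" if s: "s \<in> {1..t}" for s
  proof -
    define h where "h y = g s (SOME u. u \<in> KT \<and> real (Xn (s - 1) u) = y)" for y
    obtain f where f: "is_FFN f" "\<forall>y\<in>(\<lambda>u. real (Xn (s - 1) u)) ` KT. f y = h y"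
      using interp[of "(\<lambda>u. real (Xn (s - 1) u)) ` KT" h] finKT by auto
    have "f (real (Xn (s - 1) u)) = g s u" if u: "u \<in> KT" for u
    proof -
      define u' where "u' = (SOME u'. u' \<in> KT \<and> real (Xn (s - 1) u') = real (Xn (s - 1) u))"
      have u': "u' \<in> KT \<and> real (Xn (s - 1) u') = real (Xn (s - 1) u)"
        unfolding u'_def by (rule someI[of _ u]) (use u in simp)
      have sS: "Suc (s - 1) = s" "s - 1 < t" using s by auto
      have "col s u' = col s u" using decode[of "s - 1" u' u] u' u sS by simp
      then have "g s u' = g s u" by (simp add: g_def)
      then show ?thesis using f(2) u unfolding h_def u'_def by auto
    qed
    then show ?thesis using f(1) by blast
  qed
  then obtain F where F: "\<forall>s\<in>{1..t}. is_FFN (F s) \<and> (\<forall>u\<in>KT. F s (real (Xn (s - 1) u)) = g s u)"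
    by metis

  show ?thesis
  proof (intro exI[of _ g] exI[of _ \<beta>] exI[of _ F] conjI)
    show "\<forall>s\<in>{1..t}. is_FFN (F s)" using F by blast
    show "\<forall>s\<in>{1..t}. \<forall>u\<in>ktuples V k.
        g s u = F s (g (s - 1) u + (\<Sum>j<k. \<beta> j * (\<Sum>w\<in>V. g (s - 1) (u[j := w]))))"
      using F Xn_eq unfolding KT_def by simp
    show "\<forall>u\<in>ktuples V k. \<forall>v\<in>ktuples V k.
        g 0 u = g 0 v \<longleftrightarrow> kwl V E lab k 0 u = kwl V E lab k 0 v"
      using gcol[of 0 0] unfolding KT_def col_def by simp
    show "\<forall>u\<in>ktuples V k. \<forall>v\<in>ktuples V k.
        kwl V E lab k t u = kwl V E lab k t v \<longleftrightarrow> g t u = g t v"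
      using gcol[of t t] unfolding KT_def col_def by simp
  qed
qed

end
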